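(* Let $K\ge1$, $T\ge1$ and $\ell_1,\dots,\ell_T\in[0,1]^K$. AdaHedge's cumulative mixability gap satisfies \[ \big(\Delta^{\mathrm{ah}}_T\big)^2\le V^{\mathrm{ah}}_T\ln K+\big(1+\tfrac23\ln K\big)\Delta^{\mathrm{ah}}_T. \]
   Context: Hedge setting: $K$ experts; in round $t$ the learner chooses a probability vector $w_t$, then $\ell_t$ is revealed and the learner suffers $h_t=\sum_kw_{t,k}\ell_{t,k}$. Write $L_{t,k}=\sum_{s=1}^t\ell_{s,k}$ ($L_{0,k}=0$), $L^*_t=\min_kL_{t,k}$. Exponential weights with learning rate $\eta\in(0,\infty]$ at time $t$: $w_{t,k}=e^{-\eta L_{t-1,k}}/\sum_je^{-\eta L_{t-1,j}}$ if $\eta<\infty$; for $\eta=\infty$, $w_t$ uniform on $\{k:L_{t-1,k}=L^*_{t-1}\}$. With learning rate $\eta_t$ in round $t$: mix loss $m_t=-\frac1{\eta_t}\ln\sum_kw_{t,k}e^{-\eta_t\ell_{t,k}}$ if $\eta_t<\infty$, $m_t=L^*_t-L^*_{t-1}$ if $\eta_t=\infty$; mixability gap $\delta_t=h_t-m_t$; loss variance $v_t=\sum_kw_{t,k}(\ell_{t,k}-h_t)^2$. AdaHedge: $\Delta^{\mathrm{ah}}_0=0$; in round $t$, $\eta^{\mathrm{ah}}_t=\ln K/\Delta^{\mathrm{ah}}_{t-1}$ ($=\infty$ if $\Delta^{\mathrm{ah}}_{t-1}=0$), weights are exponential weights with learning rate $\eta^{\mathrm{ah}}_t$ from $L_{t-1}$,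 and $\Delta^{\mathrm{ah}}_t=\Delta^{\mathrm{ah}}_{t-1}+\delta^{\mathrm{ah}}_t$. $V^{\mathrm{ah}}_T=\sum_{t\le T}v^{\mathrm{ah}}_t$. *)

theory Defs
  imports "HOL-Analysis.Analysis" "HOL-Library.Extended_Real"
begin

text \<open>Experts are indexed by {..<K}; the loss of expert k in round t (t \<ge> 1) is l t k.\<close>

definition cumL :: "(nat \<Rightarrow> nat \<Rightarrow> real) \<Rightarrow> nat \<Rightarrow> nat \<Rightarrow> real" where
  "cumL l t k = (\<Sum>s\<in>{1..t}. l s k)"

definition Lstar :: "nat \<Rightarrow> (nat \<Rightarrow> nat \<Rightarrow> real) \<Rightarrow> nat \<Rightarrow> real" where
  "Lstar K l t = Min ((\<lambda>k. cumL l t k) ` {..<K})"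

definition expw :: "nat \<Rightarrow> (nat \<Rightarrow> nat \<Rightarrow> real) \<Rightarrow> ereal \<Rightarrow> nat \<Rightarrow> nat \<Rightarrow> real" where
  "expw K l eta t k =
     (if eta = \<infinity> then
        (if cumL l (t - 1) k = Lstar K l (t - 1)
         then 1 / real (card {j\<in>{..<K}. cumL l (t - 1) j = Lstar K l (t - 1)}) else 0)
      else exp (- real_of_ereal eta * cumL l (t - 1) k)
           / (\<Sum>j<K. exp (- real_of_ereal eta * cumL l (t - 1) j)))"

definition hloss :: "nat \<Rightarrow> (nat \<Rightarrow> nat \<Rightarrow> real) \<Rightarrow> ereal \<Rightarrow> nat \<Rightarrow> real" where
  "hloss K l eta t = (\<Sum>k<K. expw K l eta t k * l t k)"

definition mixloss :: "nat \<Rightarrow> (nat \<Rightarrow> nat \<Rightarrow> real) \<Rightarrow> ereal \<Rightarrow> nat \<Rightarrow> real" where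
  "mixloss K l eta t =
     (if eta = \<infinity> then Lstar K l t - Lstar K l (t - 1)
      else - (1 / real_of_ereal eta) *
             ln (\<Sum>k<K. expw K l eta t k * exp (- real_of_ereal eta * l t k)))"

definition mixgap :: "nat \<Rightarrow> (nat \<Rightarrow> nat \<Rightarrow> real) \<Rightarrow> ereal \<Rightarrow> nat \<Rightarrow> real" where
  "mixgap K l eta t = hloss K l eta t - mixloss K l eta t"

definition lossvar :: "nat \<Rightarrow> (nat \<Rightarrow> nat \<Rightarrow> real) \<Rightarrow> ereal \<Rightarrow> nat \<Rightarrow> real" where
  "lossvar K l eta t = (\<Sum>k<K. expw K l eta t k * (l t k - hloss K l eta t)^2)"

definition ah_rate :: "nat \<Rightarrow> real \<Rightarrow> ereal" where
  "ah_rate K D = (if D = 0 then \<infinity> else ereal (ln (real K) / D))"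

fun ah_Delta :: "nat \<Rightarrow> (nat \<Rightarrow> nat \<Rightarrow> real) \<Rightarrow> nat \<Rightarrow> real" where
  "ah_Delta K l 0 = 0"
| "ah_Delta K l (Suc t) =
     ah_Delta K l t + mixgap K l (ah_rate K (ah_Delta K l t)) (Suc t)"

definition ah_V :: "nat \<Rightarrow> (nat \<Rightarrow> nat \<Rightarrow> real) \<Rightarrow> nat \<Rightarrow> real" where
  "ah_V K l T = (\<Sum>t\<in>{1..T}. lossvar K l (ah_rate K (ah_Delta K l (t - 1))) t)"

end

theory Submission
  imports Defs
begin

lemma aux_g: assumes "x \<ge> (0::real)" shows "0 \<le> 1 - exp x + x * exp x"
proof -
  have "(\<lambda>x. 1 - exp x + x * exp x) 0 \<le> (\<lambda>x. 1 - exp x + x * exp x) x"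
    by (rule DERIV_nonneg_imp_nondecreasing[OF assms])
       (auto intro!: derivative_eq_intros exI simp: algebra_simps)
  then show ?thesis by simp
qed

lemma aux_p: assumes "x \<ge> (0::real)" shows "0 \<le> x/3 + 2/3 - 2/3 * exp x + x * exp x / 3"
proof -
  have "(\<lambda>x. x/3 + 2/3 - 2/3 * exp x + x * exp x / 3) 0 \<le> (\<lambda>x. x/3 + 2/3 - 2/3 * exp x + x * exp x / 3) x"
  proof (rule DERIV_nonneg_imp_nondecreasing[OF assms])
    fix y :: real assume "0 \<le> y" "y \<le> x"
    show "\<exists>d. ((\<lambda>x. x/3 + 2/3 - 2/3 * exp x + x * exp x / 3) has_real_derivative d) (at y) \<and> 0 \<le> d"
      apply (rule exI[of _ "(1 - exp y + y * exp y)/3"])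
      using aux_g[OF \<open>0 \<le> y\<close>] by (auto intro!: derivative_eq_intros simp: algebra_simps)
  qed
  then show ?thesis by simp
qed

lemma exp_bound_pos: assumes "x \<ge> (0::real)" shows "(1 - x/3) * (exp x - 1 - x) \<le> x^2/2"
proof -
  have "(\<lambda>x. x^2/2 - (1 - x/3) * (exp x - 1 - x)) 0 \<le> (\<lambda>x. x^2/2 - (1 - x/3) * (exp x - 1 - x)) x"
  proof (rule DERIV_nonneg_imp_nondecreasing[OF assms])
    fix y :: real assume "0 \<le> y" "y \<le> x"
    show "\<exists>d. ((\<lambda>x. x^2/2 - (1 - x/3) * (exp x - 1 - x)) has_real_derivative d) (at y) \<and> 0 \<le> d"
      apply (rule exI[of _ "y/3 + 2/3 - 2/3 * exp y + y * exp y / 3"])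
      apply (rule conjI)
       apply (rule derivative_eq_intros refl | simp)+
      using aux_p[OF \<open>0 \<le> y\<close>] by (simp_all add: field_simps)
  qed
  then show ?thesis by simp
qed

lemma exp_bound_neg: assumes "x \<le> (0::real)" shows "exp x - 1 - x \<le> x^2/2"
proof -
  have "(\<lambda>x. exp x - 1 - x - x^2/2) x \<le> (\<lambda>x. exp x - 1 - x - x^2/2) 0"
  proof (rule DERIV_nonneg_imp_nondecreasing[OF assms])
    fix y :: real assume "x \<le> y" "y \<le> 0"
    show "\<exists>d. ((\<lambda>x. exp x - 1 - x - x^2/2) has_real_derivative d) (at y) \<and> 0 \<le> d"
      apply (rule exI[of _ "exp y - 1 - y"])
      using exp_ge_add_one_self[of y] by (auto intro!: derivative_eq_intros simp: algebra_simps power2_eq_square)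
  qed
  then show ?thesis by simp
qed

lemma exp_bound: assumes "x \<le> eta" "0 < eta" "eta < (3::real)"
  shows "(1 - eta/3) * (exp x - 1 - x) \<le> x^2/2"
proof (cases "x \<ge> 0")
  case True
  have "(1 - eta/3) * (exp x - 1 - x) \<le> (1 - x/3) * (exp x - 1 - x)"
  proof (rule mult_right_mono)
    show "0 \<le> exp x - 1 - x" using exp_ge_add_one_self[of x] by linarith
  qed (use assms in auto)
  with exp_bound_pos[OF True] show ?thesis by linarith
next
  case False
  have "(1 - eta/3) * (exp x - 1 - x) \<le> 1 * (exp x - 1 - x)"
  proof (rule mult_right_mono)
    show "0 \<le> exp x - 1 - x" using exp_ge_add_one_self[of x] by linarith
  qed (use assms in auto)
  moreover have "exp x - 1 - x \<le> x^2/2" using exp_bound_neg[of x] False by linarith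
  ultimately show ?thesis by (simp only: mult_1_left)
qed

lemma step_finite:
  fixes A :: "'a set" and w x :: "'a \<Rightarrow> real" and eta :: real
  assumes fin: "finite A" and wpos: "\<And>k. k\<in>A \<Longrightarrow> w k \<ge> 0" and wsum: "sum w A = 1"
    and xb: "\<And>k. k\<in>A \<Longrightarrow> 0 \<le> x k \<and> x k \<le> 1" and eta: "eta > 0"
  defines "h \<equiv> (\<Sum>k\<in>A. w k * x k)"
    and "m \<equiv> - (1/eta) * ln (\<Sum>k\<in>A. w k * exp (- eta * x k))"
    and "v \<equiv> (\<Sum>k\<in>A. w k * (x k - (\<Sum>k\<in>A. w k * x k))^2)"
  shows "0 \<le> h - m" "h - m \<le> 1" "(1 - eta/3) * (h - m) \<le> eta * v / 2"
proof -
  define S where "S = (\<Sum>k\<in>A. w k * exp (- eta * x k))"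
  define R where "R = (\<Sum>k\<in>A. w k * exp (eta * (h - x k)))"
  have "(\<Sum>k\<in>A. w k * exp (- eta)) \<le> S"
    unfolding S_def using wpos xb eta by (intro sum_mono mult_left_mono) auto
  moreover have "(\<Sum>k\<in>A. w k * exp (- eta)) = exp (-eta)" using wsum by (simp add: sum_distrib_right[symmetric])
  ultimately have Spos: "S > 0" using exp_gt_zero[of "-eta"] by linarith
  have "S \<le> (\<Sum>k\<in>A. w k * 1)"
    unfolding S_def using wpos xb eta by (intro sum_mono mult_left_mono) auto
  hence S1: "S \<le> 1" using wsum by simp
  have h0: "0 \<le> h" unfolding h_def using wpos xb by (intro sum_nonneg) auto
  have "h \<le> (\<Sum>k\<in>A. w k * 1)"
    unfolding h_def using wpos xb by (intro sum_mono mult_left_mono) auto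
  hence h1: "h \<le> 1" using wsum by simp
  have m0: "m \<ge> 0" unfolding m_def S_def[symmetric] using Spos S1 eta
    by (simp add: divide_nonpos_pos)
  show "h - m \<le> 1" using m0 h1 by linarith
  have SR: "S = exp (- eta * h) * R"
    unfolding S_def R_def sum_distrib_left
  proof (rule sum.cong)
    fix k assume "k \<in> A"
    have "exp (- eta * h) * exp (eta * (h - x k)) = exp (- eta * x k)"
      by (subst mult_exp_exp) (simp add: algebra_simps)
    thus "w k * exp (- eta * x k) = exp (- eta * h) * (w k * exp (eta * (h - x k)))"
      by (metis mult.left_commute)
  qed simp
  have Rpos: "R > 0" using SR Spos by (simp add: zero_less_mult_iff)
  have hm: "h - m = ln R / eta"
    unfolding m_def S_def[symmetric] SR using Rpos eta by (simp add: ln_mult field_simps)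
  have wy0: "(\<Sum>k\<in>A. w k * (eta * (h - x k))) = 0"
  proof -
    have "(\<Sum>k\<in>A. w k * (eta * (h - x k))) = (\<Sum>k\<in>A. (eta * h) * w k - eta * (w k * x k))"
      by (rule sum.cong) (auto simp: right_diff_distrib)
    also have "\<dots> = eta * h * sum w A - eta * h"
      unfolding sum_subtractf sum_distrib_left[symmetric] h_def ..
    finally have "(\<Sum>k\<in>A. w k * (eta * (h - x k))) = eta * (h * sum w A - h)" by (simp add: right_diff_distrib)
    thus ?thesis using wsum by simp
  qed
  have "(\<Sum>k\<in>A. w k * (1 + eta * (h - x k))) \<le> R"
    unfolding R_def using wpos by (intro sum_mono mult_left_mono) (auto simp: exp_ge_add_one_self)
  moreover have "(\<Sum>k\<in>A. w k * (1 + eta * (h - x k))) = 1"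
  proof -
    have "(\<Sum>k\<in>A. w k * (1 + eta * (h - x k))) = (\<Sum>k\<in>A. w k + w k * (eta * (h - x k)))"
      by (rule sum.cong) (simp_all add: distrib_left)
    also have "\<dots> = 1" unfolding sum.distrib wsum wy0 by simp
    finally show ?thesis .
  qed
  ultimately have R1: "R \<ge> 1" by simp
  hence lnR0: "ln R \<ge> 0" by simp
  show "0 \<le> h - m" using hm lnR0 eta by simp
  have vh: "v = (\<Sum>k\<in>A. w k * (x k - h)^2)" unfolding v_def h_def ..
  have v0: "v \<ge> 0" unfolding v_def using wpos by (intro sum_nonneg) auto
  show "(1 - eta/3) * (h - m) \<le> eta * v / 2"
  proof (cases "eta < 3")
    case False
    have "(1 - eta/3) * (h - m) \<le> 0" using False hm lnR0 eta by (intro mult_nonpos_nonneg) auto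
    also have "0 \<le> eta * v / 2" using v0 eta by simp
    finally show ?thesis .
  next
    case True
    have lnR: "ln R \<le> R - 1" using Rpos ln_le_minus_one by blast
    have "(1 - eta/3) * (R - 1) = (\<Sum>k\<in>A. w k * ((1 - eta/3) * (exp (eta * (h - x k)) - 1 - eta * (h - x k))))"
    proof -
      have "(\<Sum>k\<in>A. w k * ((1 - eta/3) * (exp (eta * (h - x k)) - 1 - eta * (h - x k))))
          = (1 - eta/3) * (R - sum w A - (\<Sum>k\<in>A. w k * (eta * (h - x k))))"
      proof -
        have "(\<Sum>k\<in>A. w k * ((1 - eta/3) * (exp (eta * (h - x k)) - 1 - eta * (h - x k))))
           = (\<Sum>k\<in>A. (1 - eta/3) * (w k * exp (eta * (h - x k)) - w k - w k * (eta * (h - x k))))"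
          by (rule sum.cong) (simp_all add: algebra_simps)
        also have "\<dots> = (1 - eta/3) * (R - sum w A - (\<Sum>k\<in>A. w k * (eta * (h - x k))))"
          unfolding R_def sum_distrib_left[symmetric] sum_subtractf ..
        finally show ?thesis .
      qed
      thus ?thesis using wsum wy0 by simp
    qed
    also have "\<dots> \<le> (\<Sum>k\<in>A. w k * ((eta * (h - x k))^2 / 2))"
    proof (intro sum_mono mult_left_mono)
      fix k assume k: "k \<in> A"
      show "0 \<le> w k" using wpos k .
      have "eta * (h - x k) \<le> eta * 1" using eta h1 xb[OF k] by (intro mult_left_mono) auto
      thus "(1 - eta/3) * (exp (eta * (h - x k)) - 1 - eta * (h - x k)) \<le> (eta * (h - x k))^2 / 2"
        using exp_bound[of "eta * (h - x k)" eta] eta True by simp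
    qed
    also have "\<dots> = eta^2 * v / 2"
    proof -
      have "(\<Sum>k\<in>A. w k * ((eta * (h - x k))^2 / 2)) = (\<Sum>k\<in>A. eta^2 / 2 * (w k * (x k - h)^2))"
      proof (rule sum.cong)
        fix k assume "k \<in> A"
        have "(h - x k)^2 = (x k - h)^2" by (rule power2_commute)
        thus "w k * ((eta * (h - x k))^2 / 2) = eta^2 / 2 * (w k * (x k - h)^2)"
          by (simp add: power_mult_distrib)
      qed simp
      thus ?thesis unfolding vh sum_distrib_left[symmetric] by simp
    qed
    finally have "(1 - eta/3) * (R - 1) \<le> eta^2 * v / 2" .
    moreover have "(1 - eta/3) * ln R \<le> (1 - eta/3) * (R - 1)" using True lnR by (intro mult_left_mono) auto
    ultimately have "(1 - eta/3) * ln R \<le> eta^2 * v / 2" by linarith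
    hence "(1 - eta/3) * ln R / eta \<le> eta^2 * v / 2 / eta" using eta by (intro divide_right_mono) auto
    thus ?thesis using hm eta by (simp add: power2_eq_square)
  qed
qed

lemma cumL_Suc: "cumL l (Suc s) k = cumL l s k + l (Suc s) k"
  unfolding cumL_def by (simp add: sum.cl_ivl_Suc)

lemma Lstar_le: "k < K \<Longrightarrow> Lstar K l s \<le> cumL l s k"
  unfolding Lstar_def by (rule Min_le) auto

lemma Lstar_in: "K \<ge> 1 \<Longrightarrow> \<exists>k<K. Lstar K l s = cumL l s k"
proof -
  assume "K \<ge> 1"
  hence "Lstar K l s \<in> (\<lambda>k. cumL l s k) ` {..<K}" unfolding Lstar_def
    by (intro Min_in) (auto simp: lessThan_empty_iff)
  thus ?thesis by auto
qed

lemma inf_case: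
  assumes K: "K \<ge> 1" and t: "t \<ge> 1" and lb: "\<And>k. k < K \<Longrightarrow> 0 \<le> l t k \<and> l t k \<le> 1"
  shows "0 \<le> mixgap K l \<infinity> t \<and> mixgap K l \<infinity> t \<le> 1"
proof -
  obtain s where s: "t = Suc s" using t by (cases t) auto
  define N where "N = {j\<in>{..<K}. cumL l s j = Lstar K l s}"
  define c where "c = card N"
  have finN: "finite N" unfolding N_def by auto
  obtain k0 where k0: "k0 < K" "Lstar K l s = cumL l s k0" using Lstar_in[OF K] by blast
  have "k0 \<in> N" unfolding N_def using k0 by auto
  hence cpos: "c \<ge> 1" unfolding c_def using finN by (metis card_0_eq empty_iff less_one not_le)
  have h: "hloss K l \<infinity> t = (\<Sum>k\<in>N. l t k) / c"
  proof -
    have "hloss K l \<infinity> t = (\<Sum>k<K. (if k \<in> N then l t k / c else 0))"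
      unfolding hloss_def expw_def s N_def c_def by (intro sum.cong) auto
    also have "\<dots> = (\<Sum>k\<in>N. l t k / c)"
      unfolding N_def by (simp add: sum.inter_filter[symmetric])
    finally show ?thesis by (simp add: sum_divide_distrib)
  qed
  have m: "mixloss K l \<infinity> t = Lstar K l t - Lstar K l s"
    unfolding mixloss_def s by simp
  have "\<And>k. k \<in> N \<Longrightarrow> Lstar K l t - Lstar K l s \<le> l t k"
  proof -
    fix k assume "k \<in> N"
    hence "k < K" "cumL l s k = Lstar K l s" unfolding N_def by auto
    thus "Lstar K l t - Lstar K l s \<le> l t k" using Lstar_le[of k K l t] cumL_Suc[of l s k] s by simp
  qed
  hence "(\<Sum>k\<in>N. Lstar K l t - Lstar K l s) \<le> (\<Sum>k\<in>N. l t k)" by (intro sum_mono)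
  hence A: "c * (Lstar K l t - Lstar K l s) \<le> (\<Sum>k\<in>N. l t k)" unfolding c_def by simp
  have "(\<Sum>k\<in>N. l t k) \<le> (\<Sum>k\<in>N. 1)" using lb unfolding N_def by (intro sum_mono) auto
  hence B: "(\<Sum>k\<in>N. l t k) \<le> c" unfolding c_def by simp
  obtain k1 where k1: "k1 < K" "Lstar K l t = cumL l t k1" using Lstar_in[OF K] by blast
  have C: "Lstar K l t \<ge> Lstar K l s" using k1 Lstar_le[of k1 K l s] cumL_Suc[of l s k1] s lb[of k1] by simp
  have "Lstar K l t - Lstar K l s \<le> (\<Sum>k\<in>N. l t k) / c" using A cpos by (simp add: field_simps)
  moreover have "(\<Sum>k\<in>N. l t k) / c \<le> 1" using B cpos by simp
  ultimately show ?thesis unfolding mixgap_def h m using C by linarith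
qed

lemma expw_fin: "expw K l (ereal e) t k = exp (- e * cumL l (t - 1) k) / (\<Sum>j<K. exp (- e * cumL l (t - 1) j))"
  unfolding expw_def by simp

lemma fin_case:
  assumes K: "K \<ge> 1" and lb: "\<And>k. k < K \<Longrightarrow> 0 \<le> l t k \<and> l t k \<le> 1" and e: "e > 0"
  shows "0 \<le> mixgap K l (ereal e) t" "mixgap K l (ereal e) t \<le> 1"
    "(1 - e/3) * mixgap K l (ereal e) t \<le> e * lossvar K l (ereal e) t / 2"
proof -
  define w where "w = (\<lambda>k. expw K l (ereal e) t k)"
  define Z where "Z = (\<Sum>j<K. exp (- e * cumL l (t - 1) j))"
  have Zpos: "Z > 0" unfolding Z_def using K by (intro sum_pos) (auto simp: lessThan_empty_iff)
  have wpos: "\<And>k. k \<in> {..<K} \<Longrightarrow> w k \<ge> 0" unfolding w_def expw_fin Z_def[symmetric] using Zpos by simp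
  have wsum: "sum w {..<K} = 1" unfolding w_def expw_fin Z_def[symmetric]
    using Zpos by (simp add: sum_divide_distrib[symmetric] Z_def)
  have eq1: "hloss K l (ereal e) t = (\<Sum>k\<in>{..<K}. w k * l t k)" unfolding hloss_def w_def by simp
  have eq2: "mixloss K l (ereal e) t = - (1/e) * ln (\<Sum>k\<in>{..<K}. w k * exp (- e * l t k))"
    unfolding mixloss_def w_def by simp
  have eq3: "lossvar K l (ereal e) t = (\<Sum>k\<in>{..<K}. w k * (l t k - (\<Sum>k\<in>{..<K}. w k * l t k))^2)"
    unfolding lossvar_def eq1 unfolding w_def by simp
  note r = step_finite[of "{..<K}" w "l t" e, OF _ wpos wsum _ e]
  show "0 \<le> mixgap K l (ereal e) t" "mixgap K l (ereal e) t \<le> 1"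
    "(1 - e/3) * mixgap K l (ereal e) t \<le> e * lossvar K l (ereal e) t / 2"
    unfolding mixgap_def eq1 eq2 eq3 using r lb by auto
qed

lemma K1_zero: "ah_Delta 1 l t = 0"
proof (induction t)
  case 0 then show ?case by simp
next
  case (Suc t)
  have r: "ah_rate 1 0 = \<infinity>" unfolding ah_rate_def by simp
  have u: "{..<(1::nat)} = {0}" by auto
  have Ls: "Lstar 1 l s = cumL l s 0" for s unfolding Lstar_def u by simp
  have Nset: "{j\<in>{..<(1::nat)}. cumL l t j = Lstar 1 l t} = {0}" unfolding u Ls by auto
  have hl: "hloss 1 l \<infinity> (Suc t) = l (Suc t) 0"
  proof -
    have "expw 1 l \<infinity> (Suc t) 0 = 1"
    proof -
      have c0: "{j. j = (0::nat) \<and> cumL l t j = cumL l t 0} = {0}" by auto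
      show ?thesis unfolding expw_def diff_Suc_1 Ls by (simp add: c0)
    qed
    thus ?thesis unfolding hloss_def u by simp
  qed
  have ml: "mixloss 1 l \<infinity> (Suc t) = l (Suc t) 0"
    unfolding mixloss_def Ls by (simp add: cumL_Suc)
  have "mixgap 1 l \<infinity> (Suc t) = 0"
    unfolding mixgap_def hl ml by simp
  then show ?case using Suc r by simp
qed

lemma expw_nonneg: "expw K l eta t k \<ge> 0"
  unfolding expw_def by (auto intro!: divide_nonneg_nonneg sum_nonneg)

lemma lossvar_nonneg: "lossvar K l eta t \<ge> 0"
  unfolding lossvar_def by (intro sum_nonneg mult_nonneg_nonneg expw_nonneg) auto

lemma ah_V_Suc: "ah_V K l (Suc n) = ah_V K l n + lossvar K l (ah_rate K (ah_Delta K l n)) (Suc n)"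
  unfolding ah_V_def by (simp add: sum.cl_ivl_Suc)

lemma ah_step:
  assumes K: "K \<ge> 2" and t: "t \<ge> 1" and lb: "\<And>k. k < K \<Longrightarrow> 0 \<le> l t k \<and> l t k \<le> 1" and D: "D \<ge> 0"
  shows "0 \<le> mixgap K l (ah_rate K D) t \<and> mixgap K l (ah_rate K D) t \<le> 1 \<and>
    2 * mixgap K l (ah_rate K D) t * D \<le> lossvar K l (ah_rate K D) t * ln (real K) + 2/3 * ln (real K) * mixgap K l (ah_rate K D) t"
proof -
  have K1: "K \<ge> 1" using K by simp
  have lnK: "ln (real K) > 0" using K by simp
  have v0: "lossvar K l (ah_rate K D) t \<ge> 0" by (rule lossvar_nonneg)
  show ?thesis
  proof (cases "D = 0")
    case True
    have r: "ah_rate K D = \<infinity>" unfolding ah_rate_def using True by simp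
    have "0 \<le> mixgap K l \<infinity> t \<and> mixgap K l \<infinity> t \<le> 1" by (rule inf_case[of K t l, OF K1 t lb])
    thus ?thesis using True r v0 lnK by auto
  next
    case False
    define e where "e = ln (real K) / D"
    have epos: "e > 0" unfolding e_def using False D lnK by simp
    have r: "ah_rate K D = ereal e" unfolding ah_rate_def e_def using False by simp
    note f = fin_case[of K l t e, OF K1 lb epos]
    define d where "d = mixgap K l (ereal e) t"
    define v where "v = lossvar K l (ereal e) t"
    have lnKe: "ln (real K) = e * D" unfolding e_def using False by simp
    have "(1 - e/3) * d * (2 * D) \<le> e * v / 2 * (2 * D)"
      using f(3) D unfolding d_def v_def by (intro mult_right_mono) auto
    hence "2 * d * D \<le> v * (e * D) + 2/3 * (e * D) * d" by (simp add: algebra_simps)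
    thus ?thesis unfolding r d_def[symmetric] v_def[symmetric] lnKe using f(1,2) unfolding d_def by simp
  qed
qed

theorem lemma5:
  fixes K T :: nat and l :: "nat \<Rightarrow> nat \<Rightarrow> real"
  assumes "K \<ge> 1" and "T \<ge> 1"
    and "\<And>t k. t \<in> {1..T} \<Longrightarrow> k < K \<Longrightarrow> 0 \<le> l t k \<and> l t k \<le> 1"
  shows "(ah_Delta K l T)^2 \<le> ah_V K l T * ln (real K) + (1 + 2/3 * ln (real K)) * ah_Delta K l T"
proof (cases "K = 1")
  case True
  then show ?thesis using K1_zero[of l T] by simp
next
  case False
  hence K2: "K \<ge> 2" using assms(1) by simp
  have "n \<le> T \<longrightarrow> 0 \<le> ah_Delta K l n \<and>
     (ah_Delta K l n)^2 \<le> ah_V K l n * ln (real K) + (1 + 2/3 * ln (real K)) * ah_Delta K l n" for n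
  proof (induction n)
    case 0
    then show ?case by (simp add: ah_V_def)
  next
    case (Suc n)
    show ?case
    proof
      assume n: "Suc n \<le> T"
      define D where "D = ah_Delta K l n"
      define d where "d = mixgap K l (ah_rate K D) (Suc n)"
      define v where "v = lossvar K l (ah_rate K D) (Suc n)"
      define V where "V = ah_V K l n"
      have IH: "0 \<le> D" "D^2 \<le> V * ln (real K) + (1 + 2/3 * ln (real K)) * D"
        using Suc.IH n unfolding D_def V_def by auto
      have st: "0 \<le> d \<and> d \<le> 1 \<and> 2 * d * D \<le> v * ln (real K) + 2/3 * ln (real K) * d"
        unfolding d_def v_def
        by (rule ah_step[OF K2 _ _ IH(1)]) (use assms(3) n in auto)
      have e1: "ah_Delta K l (Suc n) = D + d" unfolding D_def d_def by simp
      have e2: "ah_V K l (Suc n) = V + v" unfolding V_def v_def D_def by (simp add: ah_V_Suc)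
      have "d^2 \<le> d" using st by (simp add: power2_eq_square mult_left_le)
      have q1: "(D + d)^2 = D^2 + 2 * d * D + d^2" by algebra
      have q2: "(V + v) * ln (real K) + (1 + 2/3 * ln (real K)) * (D + d)
          = (V * ln (real K) + (1 + 2/3 * ln (real K)) * D) + (v * ln (real K) + 2/3 * ln (real K) * d) + d"
        by algebra
      have "(D + d)^2 \<le> (V + v) * ln (real K) + (1 + 2/3 * ln (real K)) * (D + d)"
        unfolding q1 q2 using IH(2) st \<open>d^2 \<le> d\<close> by linarith
      thus "0 \<le> ah_Delta K l (Suc n) \<and>
        (ah_Delta K l (Suc n))^2 \<le> ah_V K l (Suc n) * ln (real K) + (1 + 2/3 * ln (real K)) * ah_Delta K l (Suc n)"
        unfolding e1 e2 using IH st by simp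
    qed
  qed
  then show ?thesis by simp
qed

end
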